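(* Let $A$ be a Boolean algebra (an associative ring with unity satisfying $x^2=x$ for all $x$), and let $X\subseteq A$ be a subset closed under $x\mapsto 1-x$ and with $0\in X$. Then for all $n\ge 0$: 1) $\mathcal{R}^n(X)\subseteq\mathcal{D}^{2n}(X)$, and 2) $\mathcal{D}^n(X)\subseteq\mathcal{V}_{2^{2^n}}(\mathcal{I}_{2^n}(X))$.
   Context: For $Y\subseteq A$: $\mathcal{R}(Y)=Y\cup\{-1,0,1\}\cup\{x+y: x,y\in Y\}\cup\{xy: x,y\in Y\}$; $\mathcal{D}(Y)=Y\cup\{0,1\}\cup\{x+y : x,y\in Y,\ xy=0\}\cup\{xy: x,y\in Y\}$; $\mathcal{I}_k(Y)=\{x_1x_2\cdots x_k : x_1,\dots,x_k\in Y\}$; $\mathcal{V}_k(Y)=\{x_1+\dots+x_k : x_1,\dots,x_k\in Y,\ x_ix_j=0 \text{ for all } i\neq j\}$. Powers $\mathcal{R}^n,\mathcal{D}^n$ denote $n$-fold iteration (with $\mathcal{R}^0(Y)=\mathcal{D}^0(Y)=Y$). *)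

theory Defs
  imports Main
begin

definition Rop :: "'a::ring_1 set \<Rightarrow> 'a set" where
  "Rop Y = Y \<union> {-1, 0, 1} \<union> {x + y | x y. x \<in> Y \<and> y \<in> Y} \<union> {x * y | x y. x \<in> Y \<and> y \<in> Y}"

definition Dop :: "'a::ring_1 set \<Rightarrow> 'a set" where
  "Dop Y = Y \<union> {0, 1} \<union> {x + y | x y. x \<in> Y \<and> y \<in> Y \<and> x * y = 0}
             \<union> {x * y | x y. x \<in> Y \<and> y \<in> Y}"

definition Iop :: "nat \<Rightarrow> 'a::ring_1 set \<Rightarrow> 'a set" where
  "Iop k Y = {prod_list xs | xs. length xs = k \<and> set xs \<subseteq> Y}"

definition Vop :: "nat \<Rightarrow> 'a::ring_1 set \<Rightarrow> 'a set" where
  "Vop k Y = {sum_list xs | xs. length xs = k \<and> set xs \<subseteq> Y \<and>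
               (\<forall>i<k. \<forall>j<k. i \<noteq> j \<longrightarrow> xs ! i * xs ! j = 0)}"

end

theory Submission
  imports Defs
begin

definition orth :: "'a::ring_1 list \<Rightarrow> bool" where
  "orth xs = (\<forall>i<length xs. \<forall>j<length xs. i \<noteq> j \<longrightarrow> xs ! i * xs ! j = 0)"

lemma Vop_alt: "Vop k Y = {sum_list xs | xs. length xs = k \<and> set xs \<subseteq> Y \<and> orth xs}"
  unfolding Vop_def orth_def by auto

lemma orth_Nil[simp]: "orth []" by (simp add: orth_def)

lemma orth_Cons: "orth (a#xs) \<longleftrightarrow> orth xs \<and> (\<forall>b\<in>set xs. a*b=0 \<and> b*a=0)"
proof
  assume h: "orth (a#xs)"
  have "orth xs" unfolding orth_def
  proof (intro allI impI)
    fix i j assume "i < length xs" "j < length xs" "i \<noteq> j"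
    then show "xs ! i * xs ! j = 0" using h[unfolded orth_def, rule_format, of "Suc i" "Suc j"] by simp
  qed
  moreover have "\<forall>b\<in>set xs. a*b=0 \<and> b*a=0"
  proof
    fix b assume "b \<in> set xs"
    then obtain i where i: "i < length xs" "b = xs ! i" by (metis in_set_conv_nth)
    show "a*b=0 \<and> b*a=0"
      using h[unfolded orth_def, rule_format, of 0 "Suc i"] h[unfolded orth_def, rule_format, of "Suc i" 0] i
      by simp
  qed
  ultimately show "orth xs \<and> (\<forall>b\<in>set xs. a*b=0 \<and> b*a=0)" by blast
next
  assume h: "orth xs \<and> (\<forall>b\<in>set xs. a*b=0 \<and> b*a=0)"
  show "orth (a#xs)" unfolding orth_def
  proof (intro allI impI)
    fix i j assume ij: "i < length (a#xs)" "j < length (a#xs)" "i \<noteq> j"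
    show "(a#xs) ! i * (a#xs) ! j = 0"
    proof (cases i)
      case 0
      then obtain j' where "j = Suc j'" using ij by (cases j) auto
      then show ?thesis using 0 h ij by auto
    next
      case (Suc i')
      show ?thesis
      proof (cases j)
        case 0 then show ?thesis using Suc h ij by auto
      next
        case (Suc j') then show ?thesis using \<open>i = Suc i'\<close> h ij unfolding orth_def by auto
      qed
    qed
  qed
qed

lemma orth_append: "orth (xs @ ys) \<longleftrightarrow> orth xs \<and> orth ys \<and> (\<forall>a\<in>set xs. \<forall>b\<in>set ys. a*b=0 \<and> b*a=0)"
  by (induction xs) (auto simp: orth_Cons)

lemma orth_replicate0: "orth (replicate m (0::'a::ring_1))"
  by (induction m) (auto simp: orth_Cons)

lemma Vop_mono_set: "Y \<subseteq> Z \<Longrightarrow> Vop k Y \<subseteq> Vop k Z"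
  unfolding Vop_alt by blast

lemma Vop_pad: assumes "0 \<in> Y" "k \<le> m" shows "Vop k Y \<subseteq> Vop m Y"
proof
  fix x assume "x \<in> Vop k Y"
  then obtain xs where xs: "x = sum_list xs" "length xs = k" "set xs \<subseteq> Y" "orth xs"
    unfolding Vop_alt by blast
  let ?ys = "xs @ replicate (m - k) 0"
  have "x = sum_list ?ys" "length ?ys = m" "set ?ys \<subseteq> Y" "orth ?ys"
    using xs assms by (auto simp: orth_append orth_replicate0 sum_list_replicate)
  then show "x \<in> Vop m Y" unfolding Vop_alt by blast
qed

context
  assumes idem: "\<forall>x::'a::ring_1. x * x = x"
begin

lemma idem': "(x::'a) * x = x" using idem by blast

lemma two0: "(x::'a) + x = 0"
proof -
  have "(x+x)*(x+x) = x+x" by (rule idem')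
  moreover have "(x+x)*(x+x) = (x+x)+(x+x)" by (simp only: distrib_left distrib_right idem'[of x])
  ultimately have "(x+x)+(x+x) = x+x" by simp
  then show ?thesis by (simp only: add_cancel_left_left)
qed

lemma neg_self: "- (x::'a) = x"
  using two0[of x] by (metis add_eq_0_iff)

lemma comm: "(x::'a) * y = y * x"
proof -
  have "(x+y)*(x+y) = x+y" by (rule idem')
  moreover have "(x+y)*(x+y) = x + (x*y + (y*x + y))" by (simp only: distrib_left distrib_right idem'[of x] idem'[of y] add.assoc add.left_commute)
  ultimately have "x + (x*y + (y*x + y)) = x + y" by simp
  then have "x*y + y*x = 0" by (metis add.assoc add.commute add_cancel_left_left add_left_cancel)
  then have "x*y = - (y*x)" by (simp add: eq_neg_iff_add_eq_0)
  then show ?thesis by (simp add: neg_self)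
qed

lemma lcomm: "(x::'a) * (y * z) = y * (x * z)"
  by (metis comm mult.assoc)

lemma idem2: "(x::'a) * (x * y) = x * y"
  by (metis idem' mult.assoc)

lemma compl0: "(x::'a) * (1 - x) = 0" "(1 - x) * x = 0"
  by (simp_all add: algebra_simps idem')

lemma Dop_ext: "W \<subseteq> Dop (W::'a set)" unfolding Dop_def by blast
lemma Dop_mul: "x \<in> W \<Longrightarrow> y \<in> W \<Longrightarrow> (x::'a)*y \<in> Dop W" unfolding Dop_def by blast
lemma Dop_add: "x \<in> W \<Longrightarrow> y \<in> W \<Longrightarrow> (x::'a)*y = 0 \<Longrightarrow> x+y \<in> Dop W" unfolding Dop_def by blast
lemma Dop_01: "(0::'a) \<in> Dop W" "(1::'a) \<in> Dop W" unfolding Dop_def by blast+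

lemma part1_step:
  assumes "Y \<subseteq> W" "\<forall>y\<in>Y. 1 - y \<in> W"
  shows "Rop Y \<subseteq> Dop (Dop (W::'a set)) \<and> (\<forall>z\<in>Rop Y. 1 - z \<in> Dop (Dop W))"
proof -
  have DD: "\<And>z. z \<in> W \<Longrightarrow> z \<in> Dop (Dop W)" using Dop_ext by blast
  have D1: "\<And>z. z \<in> Dop W \<Longrightarrow> z \<in> Dop (Dop W)" using Dop_ext by blast
  have "z \<in> Dop (Dop W) \<and> 1 - z \<in> Dop (Dop W)" if "z \<in> Rop Y" for z
  proof -
    from that consider "z \<in> Y" | "z = -1" | "z = 0" | "z = 1"
      | x y where "x \<in> Y" "y \<in> Y" "z = x + y" | x y where "x \<in> Y" "y \<in> Y" "z = x * y"
      unfolding Rop_def by blast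
    then show ?thesis
    proof cases
      case 1 then show ?thesis using assms DD by blast
    next
      case 2 then show ?thesis using Dop_01 D1 neg_self[of 1] two0[of 1] by (simp add: diff_minus_eq_add)
    next
      case 3 then show ?thesis using Dop_01 D1 by simp
    next
      case 4 then show ?thesis using Dop_01 D1 by simp
    next
      case (5 x y)
      have W: "x \<in> W" "y \<in> W" "1 - x \<in> W" "1 - y \<in> W" using 5 assms by blast+
      have e1: "z = x*(1-y) + (1-x)*y"
        using 5 two0[of "x*y"] by (simp add: algebra_simps)
      have o1: "(x*(1-y)) * ((1-x)*y) = 0"
        by (simp add: algebra_simps idem' idem2 lcomm comm[of y x] mult.assoc[symmetric])
      have e2: "1 - z = x*y + (1-x)*(1-y)"
        using 5 two0[of "x*y"] by (simp add: algebra_simps)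
      have o2: "(x*y) * ((1-x)*(1-y)) = 0"
        by (simp add: algebra_simps idem' idem2 lcomm comm[of y x] mult.assoc)
      show ?thesis
        using Dop_add[OF Dop_mul[OF W(1) W(4)] Dop_mul[OF W(3) W(2)] o1]
          Dop_add[OF Dop_mul[OF W(1) W(2)] Dop_mul[OF W(3) W(4)] o2] e1 e2 by simp
    next
      case (6 x y)
      have W: "x \<in> W" "y \<in> W" "1 - x \<in> W" "1 - y \<in> W" using 6 assms by blast+
      have e: "1 - z = (1-x) + x*(1-y)" using 6 by (simp add: algebra_simps)
      have o: "(1-x) * (x*(1-y)) = 0"
        by (simp add: algebra_simps idem' idem2 lcomm comm[of y x] mult.assoc)
      show ?thesis
        using Dop_add[OF Dop_ext[THEN subsetD, OF W(3)] Dop_mul[OF W(1) W(4)] o] e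
          D1[OF Dop_mul[OF W(1) W(2)]] 6 by metis
    qed
  qed
  then show ?thesis by blast
qed


lemma Dop_mono: "Y \<subseteq> Z \<Longrightarrow> Dop (Y::'a set) \<subseteq> Dop Z" unfolding Dop_def by blast

lemma Iop_pad1: "x \<in> Iop (Suc k) (X::'a set) \<Longrightarrow> x \<in> Iop (Suc (Suc k)) X"
proof -
  assume "x \<in> Iop (Suc k) X"
  then obtain xs where xs: "x = prod_list xs" "length xs = Suc k" "set xs \<subseteq> X" unfolding Iop_def by blast
  then obtain a ys where "xs = a # ys" by (cases xs) auto
  then have "x = prod_list (a#a#ys)" "length (a#a#ys) = Suc (Suc k)" "set (a#a#ys) \<subseteq> X"
    using xs by (auto simp: idem2)
  then show ?thesis unfolding Iop_def by blast
qed

lemma Iop_pad: "1 \<le> k \<Longrightarrow> k \<le> m \<Longrightarrow> Iop k (X::'a set) \<subseteq> Iop m X"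
proof (induction m)
  case 0 then show ?case by simp
next
  case (Suc m)
  show ?case
  proof (cases "k = Suc m")
    case True then show ?thesis by simp
  next
    case False
    then have "Iop k X \<subseteq> Iop m X" using Suc by simp
    moreover obtain m' where "m = Suc m'" using Suc False by (cases m) auto
    ultimately show ?thesis using Iop_pad1 by blast
  qed
qed

lemma Iop_mult: "a \<in> Iop k (X::'a set) \<Longrightarrow> b \<in> Iop m X \<Longrightarrow> a * b \<in> Iop (k + m) X"
proof -
  assume "a \<in> Iop k X" "b \<in> Iop m X"
  then obtain xs ys where "a = prod_list xs" "length xs = k" "set xs \<subseteq> X"
    "b = prod_list ys" "length ys = m" "set ys \<subseteq> X" unfolding Iop_def by blast
  then have "a*b = prod_list (xs@ys)" "length (xs@ys) = k+m" "set (xs@ys) \<subseteq> X" by auto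
  then show ?thesis unfolding Iop_def by blast
qed

lemma X_sub: assumes "0 \<in> X" "1 \<le> k" "1 \<le> m" shows "(X::'a set) \<subseteq> Vop k (Iop m X)"
proof
  fix x assume x: "x \<in> X"
  have "x = prod_list [x]" "length [x] = 1" "set [x] \<subseteq> X" using x by auto
  then have xi: "x \<in> Iop m X" using Iop_pad[of 1 m X] assms unfolding Iop_def by blast
  have zi: "0 \<in> Iop m X"
  proof -
    have "(0::'a) = prod_list [0]" "length [0::'a] = 1" "set [0::'a] \<subseteq> X" using assms by auto
    then show ?thesis using Iop_pad[of 1 m X] assms unfolding Iop_def by blast
  qed
  have "x = sum_list [x]" "length [x] = 1" "set [x] \<subseteq> Iop m X" "orth [x]" using xi by (auto simp: orth_Cons)
  then have "x \<in> Vop 1 (Iop m X)" unfolding Vop_alt by blast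
  then show "x \<in> Vop k (Iop m X)" using Vop_pad[OF zi] assms by blast
qed

lemma mult_sum_list_zero: "\<forall>c\<in>set cs. a * c = 0 \<Longrightarrow> (a::'a) * sum_list cs = 0"
  by (induction cs) (auto simp: distrib_left)

lemma orth_mul_sum: "orth as \<Longrightarrow> a \<in> set as \<Longrightarrow> (a::'a) * sum_list as = a"
proof (induction as)
  case Nil then show ?case by simp
next
  case (Cons b as)
  show ?case
  proof (cases "a = b")
    case True
    then have "a * sum_list as = 0" using Cons.prems mult_sum_list_zero by (auto simp: orth_Cons)
    then show ?thesis using True by (simp add: distrib_left idem')
  next
    case False
    then have "a \<in> set as" using Cons.prems by simp
    then have "a * sum_list as = a" "a * b = 0" using Cons by (auto simp: orth_Cons)
    then show ?thesis by (simp add: distrib_left)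
  qed
qed

lemma Vop_add: assumes "x \<in> Vop k Z" "y \<in> Vop k Z" "x * y = (0::'a)"
  shows "x + y \<in> Vop (2*k) Z"
proof -
  obtain as where as: "x = sum_list as" "length as = k" "set as \<subseteq> Z" "orth as"
    using assms(1) unfolding Vop_alt by blast
  obtain bs where bs: "y = sum_list bs" "length bs = k" "set bs \<subseteq> Z" "orth bs"
    using assms(2) unfolding Vop_alt by blast
  have "a * b = 0 \<and> b * a = 0" if "a \<in> set as" "b \<in> set bs" for a b
  proof -
    have ax: "a * x = a" using orth_mul_sum[OF as(4) that(1)] as(1) by simp
    have yb: "y * b = b" using orth_mul_sum[OF bs(4) that(2)] bs(1) comm[of y b] by simp
    have "a * b = (a * x) * (y * b)" by (simp only: ax yb)
    also have "\<dots> = 0" using assms(3) by (simp add: mult.assoc[symmetric]) (simp add: mult.assoc)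
    finally show ?thesis by (simp add: comm[of b a])
  qed
  then have "x + y = sum_list (as@bs)" "length (as@bs) = 2*k" "set (as@bs) \<subseteq> Z" "orth (as@bs)"
    using as bs by (auto simp: orth_append)
  then show ?thesis unfolding Vop_alt by blast
qed

lemma swap: "((a::'a)*b)*(c*d) = (a*c)*(b*d)" by (metis mult.assoc lcomm)

lemma zero_Iop: "0 \<in> X \<Longrightarrow> 1 \<le> m \<Longrightarrow> (0::'a) \<in> Iop m X"
proof -
  assume a: "0 \<in> X" "1 \<le> m"
  have "(0::'a) = prod_list [0]" "length [0::'a] = 1" "set [0::'a] \<subseteq> X" using a by auto
  then show ?thesis using Iop_pad[of 1 m X] a unfolding Iop_def by blast
qed

definition pl :: "'a list \<Rightarrow> 'a list \<Rightarrow> 'a list" where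
  "pl as bs = concat (map (\<lambda>a. map (\<lambda>b. a*b) bs) as)"

lemma sum_map_mult: "sum_list (map (\<lambda>b. a*b) bs) = (a::'a) * sum_list bs"
  by (induction bs) (auto simp: distrib_left)

lemma pl_props:
  shows "length (pl as bs) = length as * length bs"
    and "sum_list (pl as bs) = sum_list as * sum_list bs"
    and "set (pl as bs) = {a * b | a b. a \<in> set as \<and> b \<in> set bs}"
  unfolding pl_def
  by (induction as) (auto simp: sum_map_mult distrib_right)

lemma orth_map_mult: "orth bs \<Longrightarrow> orth (map (\<lambda>b. (a::'a)*b) bs)"
proof (induction bs)
  case Nil then show ?case by simp
next
  case (Cons b bs)
  have "(a*b)*(a*c) = 0 \<and> (a*c)*(a*b) = 0" if "c \<in> set bs" for c
  proof -
    have "b*c = 0" "c*b = 0" using Cons.prems that by (auto simp: orth_Cons)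
    moreover have "(a*b)*(a*c) = a*(b*c)" "(a*c)*(a*b) = a*(c*b)"
      by (simp_all only: swap[of a] idem')
    ultimately show ?thesis by simp
  qed
  then show ?case using Cons by (auto simp: orth_Cons)
qed

lemma orth_pl: "orth as \<Longrightarrow> orth bs \<Longrightarrow> orth (pl (as::'a list) bs)"
proof (induction as)
  case Nil then show ?case by (simp add: pl_def)
next
  case (Cons a as)
  have pc: "pl (a#as) bs = map (\<lambda>b. a*b) bs @ pl as bs" by (simp add: pl_def)
  have "orth (pl as bs)" using Cons by (auto simp: orth_Cons)
  moreover have "orth (map (\<lambda>b. a*b) bs)" using Cons orth_map_mult by blast
  moreover have "(a*b)*(c*d) = 0 \<and> (c*d)*(a*b) = 0" if "b \<in> set bs" "c \<in> set as" "d \<in> set bs" for b c d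
  proof -
    have "a*c = 0" "c*a = 0" using Cons.prems that by (auto simp: orth_Cons)
    moreover have "(a*b)*(c*d) = (a*c)*(b*d)" "(c*d)*(a*b) = (c*a)*(d*b)"
      by (simp_all only: swap)
    ultimately show ?thesis by simp
  qed
  ultimately show ?case unfolding pc orth_append using pl_props(3) by auto
qed

lemma Vop_mult: assumes "x \<in> Vop k (Iop p X)" "y \<in> Vop k (Iop p X)"
  shows "(x::'a) * y \<in> Vop (k*k) (Iop (p+p) X)"
proof -
  obtain as where as: "x = sum_list as" "length as = k" "set as \<subseteq> Iop p X" "orth as"
    using assms(1) unfolding Vop_alt by blast
  obtain bs where bs: "y = sum_list bs" "length bs = k" "set bs \<subseteq> Iop p X" "orth bs"
    using assms(2) unfolding Vop_alt by blast
  have "set (pl as bs) \<subseteq> Iop (p+p) X"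
    unfolding pl_props(3) using as(3) bs(3) by (auto intro!: Iop_mult)
  moreover have "x * y = sum_list (pl as bs)" "length (pl as bs) = k*k" 
    "orth (pl as bs)"
    using as bs pl_props orth_pl by auto
  ultimately show ?thesis unfolding Vop_alt by blast
qed

lemma part2_step:
  assumes "0 \<in> X" "1 \<in> X" "1 \<le> N" "2 \<le> M"
  shows "Dop (Vop M (Iop N X)) \<subseteq> Vop (M*M) (Iop (N+N) (X::'a set))"
proof -
  let ?Z = "Iop (N+N) X"
  have z0: "0 \<in> ?Z" using zero_Iop assms by simp
  have MM: "M \<le> M*M" "2*M \<le> M*M" using assms by auto
  have Y1: "Vop M (Iop N X) \<subseteq> Vop M ?Z" by (rule Vop_mono_set[OF Iop_pad]) (use assms in auto)
  have Y2: "Vop M ?Z \<subseteq> Vop (M*M) ?Z" by (rule Vop_pad[OF z0 MM(1)])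
  have XS: "X \<subseteq> Vop (M*M) ?Z" using X_sub[of X "M*M" "N+N"] assms MM by auto
  show ?thesis
  proof
    fix z assume "z \<in> Dop (Vop M (Iop N X))"
    then consider "z \<in> Vop M (Iop N X)" | "z = 0" | "z = 1"
      | x y where "x \<in> Vop M (Iop N X)" "y \<in> Vop M (Iop N X)" "x*y = 0" "z = x + y"
      | x y where "x \<in> Vop M (Iop N X)" "y \<in> Vop M (Iop N X)" "z = x * y"
      unfolding Dop_def by blast
    then show "z \<in> Vop (M*M) ?Z"
    proof cases
      case 1 then show ?thesis using Y1 Y2 by blast
    next
      case 2 then show ?thesis using XS assms by blast
    next
      case 3 then show ?thesis using XS assms by blast
    next
      case (4 x y)
      then have "z \<in> Vop (2*M) ?Z" using Vop_add Y1 by blast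
      then show ?thesis using Vop_pad[OF z0 MM(2)] by blast
    next
      case (5 x y) then show ?thesis using Vop_mult by blast
    qed
  qed
qed
end

theorem mainTheorem7:
  fixes X :: "'a::ring_1 set"
  assumes idem: "\<forall>x::'a. x * x = x"
    and compl: "\<forall>x\<in>X. 1 - x \<in> X"
    and zero: "0 \<in> X"
  shows "\<forall>n::nat. (Rop ^^ n) X \<subseteq> (Dop ^^ (2 * n)) X
            \<and> (Dop ^^ n) X \<subseteq> Vop (2 ^ (2 ^ n)) (Iop (2 ^ n) X)"
proof -
  have P1: "(Rop ^^ n) X \<subseteq> (Dop ^^ (2 * n)) X \<and> (\<forall>y\<in>(Rop ^^ n) X. 1 - y \<in> (Dop ^^ (2 * n)) X)" for n
  proof (induction n)
    case 0 then show ?case using compl by simp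
  next
    case (Suc n)
    have "(Rop ^^ Suc n) X = Rop ((Rop ^^ n) X)" by simp
    moreover have "(Dop ^^ (2 * Suc n)) X = Dop (Dop ((Dop ^^ (2 * n)) X))" by simp
    moreover have "Rop ((Rop ^^ n) X) \<subseteq> Dop (Dop ((Dop ^^ (2 * n)) X)) \<and> (\<forall>z\<in>Rop ((Rop ^^ n) X). 1 - z \<in> Dop (Dop ((Dop ^^ (2 * n)) X)))"
      using part1_step[OF idem] Suc.IH by blast
    ultimately show ?case by simp
  qed
  have one: "1 \<in> X" using compl zero by force
  have P2: "(Dop ^^ n) X \<subseteq> Vop (2 ^ (2 ^ n)) (Iop (2 ^ n) X)" for n
  proof (induction n)
    case 0
    show ?case using X_sub[OF idem zero, of 2 1] by simp
  next
    case (Suc n)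
    have M: "(2::nat) ^ (2 ^ Suc n) = 2 ^ (2 ^ n) * 2 ^ (2 ^ n)"
      by (simp add: power_add[symmetric])
    have N: "(2::nat) ^ Suc n = 2 ^ n + 2 ^ n" by simp
    have M2: "(2::nat) \<le> 2 ^ (2 ^ n)"
      using power_increasing[of 1 "2^n" "2::nat"] by simp
    have "(Dop ^^ Suc n) X \<subseteq> Dop (Vop (2 ^ (2 ^ n)) (Iop (2 ^ n) X))"
      using Dop_mono[OF idem Suc.IH] by simp
    also have "\<dots> \<subseteq> Vop (2 ^ (2 ^ Suc n)) (Iop (2 ^ Suc n) X)"
      unfolding M unfolding N by (rule part2_step[OF idem zero one]) (use M2 in auto)
    finally show ?case .
  qed
  show ?thesis using P1 P2 by blast
qed

end
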